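(* Let $M$ be a finite set of integers in $[-t,t]$ for an integer $t\ge1$, and let $K\ge2$ be an integer. For each $m\in M$ set $m'=\frac{m}{t\sqrt K}$ and define $X=\{\ell_m=(-\sqrt{1-m'^2},m',0)^\top: m\in M\}\cup\{r_m=(\sqrt{1-m'^2},0,m')^\top: m\in M\}\subseteq S^2$, and let $k=2K$. If $M$ has a $K$-subset with zero sum, then $X$ has a $k$-subset $T$ with centroid $z_T=0$. Otherwise, every $k$-subset $T\subseteq X$ satisfies $\|z_T\|\ge\frac{1}{2tK^{3/2}}$.
   Context: The centroid of a finite set $T\subseteq\mathbb{R}^3$ is $z_T=\frac{1}{|T|}\sum_{u\in T}u$; $\|\cdot\|$ is the Euclidean norm and $S^2$ the unit sphere in $\mathbb{R}^3$. *)

theory Defs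
  imports "HOL-Analysis.Analysis"
begin

definition centroid :: "(real^3) set \<Rightarrow> real^3" where
  "centroid T = (1 / real (card T)) *\<^sub>R (\<Sum>u\<in>T. u)"

definition mprime :: "int \<Rightarrow> nat \<Rightarrow> int \<Rightarrow> real" where
  "mprime t K m = real_of_int m / (real_of_int t * sqrt (real K))"

definition lpt :: "int \<Rightarrow> nat \<Rightarrow> int \<Rightarrow> real^3" where
  "lpt t K m = vector [- sqrt (1 - (mprime t K m)\<^sup>2), mprime t K m, 0]"

definition rpt :: "int \<Rightarrow> nat \<Rightarrow> int \<Rightarrow> real^3" where
  "rpt t K m = vector [sqrt (1 - (mprime t K m)\<^sup>2), 0, mprime t K m]"

definition Xset :: "int \<Rightarrow> nat \<Rightarrow> int set \<Rightarrow> (real^3) set" where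
  "Xset t K M = lpt t K ` M \<union> rpt t K ` M"

end

theory Submission
  imports Defs
begin

lemma lpt_c: "lpt t K m $ 1 = - sqrt (1 - (mprime t K m)\<^sup>2)" "lpt t K m $ 2 = mprime t K m" "lpt t K m $ 3 = 0"
  by (simp_all add: lpt_def)

lemma rpt_c: "rpt t K m $ 1 = sqrt (1 - (mprime t K m)\<^sup>2)" "rpt t K m $ 2 = 0" "rpt t K m $ 3 = mprime t K m"
  by (simp_all add: rpt_def)

lemma mp_sq:
  assumes "t \<ge> 1" "K \<ge> 2" "- t \<le> m" "m \<le> t"
  shows "(mprime t K m)\<^sup>2 \<le> 1 / real K"
proof -
  have "\<bar>real_of_int m\<bar> \<le> real_of_int t" using assms by linarith
  hence "(real_of_int m)\<^sup>2 \<le> (real_of_int t)\<^sup>2"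
    by (metis abs_le_square_iff abs_of_nonneg assms(1) of_int_1_le_iff order_trans zero_le_one)
  moreover have "(mprime t K m)\<^sup>2 = (real_of_int m)\<^sup>2 / ((real_of_int t)\<^sup>2 * real K)"
    unfolding mprime_def using assms by (simp add: power_divide power_mult_distrib)
  moreover have "(real_of_int t)\<^sup>2 > 0" using assms by simp
  moreover have "real K > 0" using assms by simp
  ultimately have "(mprime t K m)\<^sup>2 * real K * (real_of_int t)\<^sup>2 \<le> 1 * (real_of_int t)\<^sup>2"
    by (simp add: mult.commute mult.left_commute)
  hence "(mprime t K m)\<^sup>2 * real K \<le> 1"
    using \<open>(real_of_int t)\<^sup>2 > 0\<close> mult_right_le_imp_le by blast
  thus ?thesis using assms by (simp add: divide_simps)
qed

lemma s_bounds:
  assumes "t \<ge> 1" "K \<ge> 2" "- t \<le> m" "m \<le> t"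
  shows "sqrt (1 - (mprime t K m)\<^sup>2) \<le> 1" "sqrt (1 - (mprime t K m)\<^sup>2) \<ge> 1 - 2 / (3 * real K)"
    "sqrt (1 - (mprime t K m)\<^sup>2) > 0"
proof -
  have h: "(mprime t K m)\<^sup>2 \<le> 1 / real K" by (rule mp_sq[OF assms])
  have K: "real K \<ge> 2" using assms by simp
  have h2: "1 / real K \<le> 1/2" using K by (simp add: divide_simps)
  show "sqrt (1 - (mprime t K m)\<^sup>2) \<le> 1" by simp
  show "sqrt (1 - (mprime t K m)\<^sup>2) > 0" using h h2 by simp
  have p: "0 \<le> 1 - 2 / (3 * real K)" using K by (simp add: divide_simps)
  have "(1 - 2 / (3 * real K))\<^sup>2 \<le> 1 - 1 / real K"
    using K by (simp add: power2_eq_square field_simps)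
  also have "\<dots> \<le> 1 - (mprime t K m)\<^sup>2" using h by simp
  finally show "sqrt (1 - (mprime t K m)\<^sup>2) \<ge> 1 - 2 / (3 * real K)"
    using p real_le_rsqrt by blast
qed

lemma mprime_inj:
  assumes "t \<ge> 1" "K \<ge> 2"
  shows "inj (mprime t K)"
  using assms by (auto simp: inj_def mprime_def)

lemma lpt_inj: assumes "t \<ge> 1" "K \<ge> 2" shows "inj (lpt t K)"
  using mprime_inj[OF assms] by (auto simp: inj_def dest: arg_cong[where f="\<lambda>v. v $ 2"] simp: lpt_c)

lemma rpt_inj: assumes "t \<ge> 1" "K \<ge> 2" shows "inj (rpt t K)"
  using mprime_inj[OF assms] by (auto simp: inj_def dest: arg_cong[where f="\<lambda>v. v $ 3"] simp: rpt_c)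

lemma lr_disj:
  assumes "t \<ge> 1" "K \<ge> 2" "\<forall>m\<in>M. - t \<le> m \<and> m \<le> t"
  shows "lpt t K ` M \<inter> rpt t K ` M = {}"
proof (rule ccontr)
  assume "lpt t K ` M \<inter> rpt t K ` M \<noteq> {}"
  then obtain a b where ab: "a \<in> M" "b \<in> M" "lpt t K a = rpt t K b" by auto
  hence "lpt t K a $ 1 = rpt t K b $ 1" by simp
  hence "- sqrt (1 - (mprime t K a)\<^sup>2) = sqrt (1 - (mprime t K b)\<^sup>2)" by (simp add: lpt_c rpt_c)
  moreover have "sqrt (1 - (mprime t K a)\<^sup>2) > 0" "sqrt (1 - (mprime t K b)\<^sup>2) > 0"
    using s_bounds(3)[OF assms(1,2)] assms(3) ab by auto
  ultimately show False by linarith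
qed

lemma powr32: "real K powr (3/2) = real K * sqrt (real K)"
proof -
  have "real K powr (3/2) = real K powr (1 + 1/2)" by simp
  also have "\<dots> = real K powr 1 * real K powr (1/2)" by (rule powr_add)
  finally show ?thesis by (cases "K = 0") (simp_all add: powr_half_sqrt)
qed

theorem lemma18:
  fixes M :: "int set" and t :: int and K :: nat
  assumes "finite M" and "t \<ge> 1" and "\<forall>m\<in>M. - t \<le> m \<and> m \<le> t" and "K \<ge> 2"
  shows "((\<exists>S\<subseteq>M. card S = K \<and> (\<Sum>m\<in>S. m) = 0) \<longrightarrow>
            (\<exists>T\<subseteq>Xset t K M. card T = 2 * K \<and> centroid T = 0))
       \<and> ((\<not> (\<exists>S\<subseteq>M. card S = K \<and> (\<Sum>m\<in>S. m) = 0)) \<longrightarrow>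
            (\<forall>T\<subseteq>Xset t K M. card T = 2 * K \<longrightarrow>
               norm (centroid T) \<ge> 1 / (2 * real_of_int t * real K powr (3/2))))"
proof -
  note fin = assms(1) and tt = assms(2) and rng = assms(3) and KK = assms(4)
  define s where "s m = sqrt (1 - (mprime t K m)\<^sup>2)" for m
  have sumA: "(\<Sum>m\<in>A. mprime t K m) = real_of_int (\<Sum>m\<in>A. m) / (real_of_int t * sqrt (real K))" for A
    by (simp add: mprime_def sum_divide_distrib)
  have linj: "inj_on (lpt t K) A" for A using lpt_inj[OF tt KK] by (simp add: inj_on_def inj_def)
  have rinj: "inj_on (rpt t K) A" for A using rpt_inj[OF tt KK] by (simp add: inj_on_def inj_def)
  have decomp: "card (lpt t K ` A \<union> rpt t K ` B) = card A + card B \<and>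
     (\<Sum>u\<in>lpt t K ` A \<union> rpt t K ` B. u) = (\<Sum>m\<in>A. lpt t K m) + (\<Sum>m\<in>B. rpt t K m)"
    if "A \<subseteq> M" "B \<subseteq> M" for A B
  proof -
    have fA: "finite A" "finite B" using that fin finite_subset by auto
    have d: "lpt t K ` A \<inter> rpt t K ` B = {}" using lr_disj[OF tt KK rng] that by blast
    show ?thesis
      using fA d linj rinj
      by (simp add: card_Un_disjoint sum.union_disjoint card_image sum.reindex)
  qed
  have Kpos: "real K \<ge> 2" using KK by simp
  show ?thesis
  proof (intro conjI impI)
    assume "\<exists>S\<subseteq>M. card S = K \<and> (\<Sum>m\<in>S. m) = 0"
    then obtain S where S: "S \<subseteq> M" "card S = K" "(\<Sum>m\<in>S. m) = 0" by blast
    let ?T = "lpt t K ` S \<union> rpt t K ` S"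
    have dc: "card ?T = 2 * K" "(\<Sum>u\<in>?T. u) = (\<Sum>m\<in>S. lpt t K m) + (\<Sum>m\<in>S. rpt t K m)"
      using decomp[OF S(1) S(1)] S(2) by auto
    have z: "(\<Sum>m\<in>S. mprime t K m) = 0" by (simp only: sumA S(3))
    have "(\<Sum>u\<in>?T. u) = 0"
      unfolding dc(2) vec_eq_iff forall_3
      using z by (simp add: lpt_c rpt_c sum.distrib[symmetric])
    hence "centroid ?T = 0" by (simp add: centroid_def)
    moreover have "?T \<subseteq> Xset t K M" using S(1) by (auto simp: Xset_def)
    ultimately show "\<exists>T\<subseteq>Xset t K M. card T = 2 * K \<and> centroid T = 0" using dc(1) by blast
  next
    assume nS: "\<not> (\<exists>S\<subseteq>M. card S = K \<and> (\<Sum>m\<in>S. m) = 0)"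
    show "\<forall>T\<subseteq>Xset t K M. card T = 2 * K \<longrightarrow>
               norm (centroid T) \<ge> 1 / (2 * real_of_int t * real K powr (3/2))"
    proof (intro allI impI)
      fix T assume T: "T \<subseteq> Xset t K M" "card T = 2 * K"
      define A where "A = {m\<in>M. lpt t K m \<in> T}"
      define B where "B = {m\<in>M. rpt t K m \<in> T}"
      have AB: "A \<subseteq> M" "B \<subseteq> M" unfolding A_def B_def by auto
      have fA: "finite A" "finite B" using AB fin finite_subset by auto
      have Teq: "T = lpt t K ` A \<union> rpt t K ` B"
        using T(1) unfolding A_def B_def Xset_def by auto
      have cAB: "card A + card B = 2 * K" using decomp[OF AB] Teq T(2) by simp
      define v where "v = (\<Sum>u\<in>T. u)"
      have v: "v = (\<Sum>m\<in>A. lpt t K m) + (\<Sum>m\<in>B. rpt t K m)" using decomp[OF AB] Teq v_def by simp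
      have v1: "v $ 1 = (\<Sum>m\<in>B. s m) - (\<Sum>m\<in>A. s m)"
        unfolding v by (simp add: lpt_c rpt_c s_def sum_negf)
      have v2: "v $ 2 = (\<Sum>m\<in>A. mprime t K m)"
        unfolding v by (simp add: lpt_c rpt_c)
      have cn: "norm (centroid T) = norm v / (2 * real K)"
        using T(2) by (simp add: centroid_def v_def)
      have n1: "\<bar>v $ 1\<bar> \<le> norm v" "\<bar>v $ 2\<bar> \<le> norm v" by (simp_all add: component_le_norm_cart)
      have tpos: "real_of_int t \<ge> 1" using tt by simp
      have sK: "sqrt (real K) \<ge> 1" using Kpos by simp
      have tgt: "1 / (2 * real_of_int t * real K powr (3/2)) = 1 / (2 * real K) * (1 / (real_of_int t * sqrt (real K)))"
        by (simp add: powr32)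
      have ts1: "1 / (real_of_int t * sqrt (real K)) \<le> 1"
      proof -
        have "1 * 1 \<le> real_of_int t * sqrt (real K)" using mult_mono[OF tpos sK] tt by simp
        thus ?thesis by simp
      qed
      have big: "norm v \<ge> 1 / (real_of_int t * sqrt (real K))"
      proof (cases "card A = K")
        case True
        hence "(\<Sum>m\<in>A. m) \<noteq> 0" using nS AB by blast
        hence "\<bar>real_of_int (\<Sum>m\<in>A. m)\<bar> \<ge> 1" by linarith
        hence "\<bar>v $ 2\<bar> \<ge> 1 / (real_of_int t * sqrt (real K))"
          unfolding v2 sumA using tpos sK by (simp add: abs_div divide_right_mono)
        thus ?thesis using n1 by linarith
      next
        case False
        have sb: "\<And>m. m \<in> M \<Longrightarrow> s m \<le> 1 \<and> s m \<ge> 1 - 2 / (3 * real K)"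
          unfolding s_def using s_bounds[OF tt KK] rng by auto
        have lowA: "(\<Sum>m\<in>A. s m) \<ge> real (card A) * (1 - 2 / (3 * real K))"
          using sum_mono[of A "\<lambda>_. 1 - 2 / (3 * real K)" s] sb AB by auto
        have upA: "(\<Sum>m\<in>A. s m) \<le> real (card A)"
          using sum_mono[of A s "\<lambda>_. 1"] sb AB by auto
        have lowB: "(\<Sum>m\<in>B. s m) \<ge> real (card B) * (1 - 2 / (3 * real K))"
          using sum_mono[of B "\<lambda>_. 1 - 2 / (3 * real K)" s] sb AB by auto
        have upB: "(\<Sum>m\<in>B. s m) \<le> real (card B)"
          using sum_mono[of B s "\<lambda>_. 1"] sb AB by auto
        have key: "real (K + 1) * (1 - 2 / (3 * real K)) - real (K - 1) \<ge> 1"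
          using Kpos KK by (simp add: field_simps of_nat_diff)
        have "\<bar>v $ 1\<bar> \<ge> 1"
        proof (cases "card A > K")
          case True
          hence ca: "card A \<ge> K + 1" "card B \<le> K - 1" using cAB by auto
          have "real (card A) * (1 - 2 / (3 * real K)) \<ge> real (K + 1) * (1 - 2 / (3 * real K))"
            using ca Kpos by (intro mult_right_mono) (auto simp: field_simps)
          moreover have "real (card B) \<le> real (K - 1)" using ca by simp
          ultimately show ?thesis using v1 lowA upB key by linarith
        next
          case f2: False
          hence ca: "card B \<ge> K + 1" "card A \<le> K - 1" using cAB False by auto
          have "real (card B) * (1 - 2 / (3 * real K)) \<ge> real (K + 1) * (1 - 2 / (3 * real K))"
            using ca Kpos by (intro mult_right_mono) (auto simp: field_simps)
          moreover have "real (card A) \<le> real (K - 1)" using ca by simp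
          ultimately show ?thesis using v1 lowB upA key by linarith
        qed
        thus ?thesis using n1 ts1 by linarith
      qed
      show "norm (centroid T) \<ge> 1 / (2 * real_of_int t * real K powr (3/2))"
        unfolding cn tgt using big Kpos by (simp add: divide_simps)
    qed
  qed
qed

end
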